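(* Let $\mathbf{B}$ be the interaction matrix of an antiferromagnetic $q$-spin system, and let $\mathbf{z}_1,\mathbf{z}_2\in\mathbb{R}^q_{\geq0}$ with $\|\mathbf{z}_1\|_1=\|\mathbf{z}_2\|_1=1$. Then \[(\mathbf{z}_1^{\intercal}\mathbf{B}\mathbf{z}_1)(\mathbf{z}_2^{\intercal}\mathbf{B}\mathbf{z}_2)\leq(\mathbf{z}_1^{\intercal}\mathbf{B}\mathbf{z}_2)^2,\] with equality if and only if $\mathbf{z}_1=\mathbf{z}_2$.
   Context: $\mathbf{B}$ is a symmetric irreducible $q\times q$ matrix with nonnegative entries. It is antiferromagnetic if, apart from its Perron–Frobenius eigenvalue (which is positive and simple), all its eigenvalues are negative; in particular $\mathbf{B}$ is invertible. *)

theory Defs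
  imports "HOL-Analysis.Analysis"
begin

definition sym_matrix :: "real^'n^'n \<Rightarrow> bool" where
  "sym_matrix B \<longleftrightarrow> transpose B = B"

definition nonneg_matrix :: "real^'n^'n \<Rightarrow> bool" where
  "nonneg_matrix B \<longleftrightarrow> (\<forall>i j. B$i$j \<ge> 0)"

definition irreducible_matrix :: "real^'n^'n \<Rightarrow> bool" where
  "irreducible_matrix B \<longleftrightarrow>
     (\<forall>S. S \<noteq> {} \<and> S \<noteq> UNIV \<longrightarrow> (\<exists>i\<in>S. \<exists>j. j \<notin> S \<and> B$i$j \<noteq> 0))"

definition is_eigenvalue :: "real^'n^'n \<Rightarrow> real \<Rightarrow> bool" where
  "is_eigenvalue B \<mu> \<longleftrightarrow> (\<exists>v. v \<noteq> 0 \<and> B *v v = \<mu> *\<^sub>R v)"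

definition eigsp :: "real^'n^'n \<Rightarrow> real \<Rightarrow> (real^'n) set" where
  "eigsp B \<mu> = {v. B *v v = \<mu> *\<^sub>R v}"

text \<open>Antiferromagnetic interaction matrix: symmetric, irreducible, nonnegative; its
 Perron--Frobenius eigenvalue is positive and simple and all other eigenvalues are negative.
 (For a real symmetric matrix all eigenvalues are real and geometric = algebraic multiplicity;
 the unique positive eigenvalue is necessarily the Perron--Frobenius eigenvalue.)\<close>
definition antiferromagnetic :: "real^'n^'n \<Rightarrow> bool" where
  "antiferromagnetic B \<longleftrightarrow> sym_matrix B \<and> nonneg_matrix B \<and> irreducible_matrix B \<and>
     (\<exists>r. r > 0 \<and> is_eigenvalue B r \<and> dim (eigsp B r) = 1 \<and>
        (\<forall>\<mu>. is_eigenvalue B \<mu> \<and> \<mu> \<noteq> r \<longrightarrow> \<mu> < 0))"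

end

theory Submission
  imports Defs
begin

lemma symB: fixes B :: "real^'n^'n" assumes "transpose B = B" shows "y \<bullet> (B *v x) = (B *v y) \<bullet> x"
proof -
  have "y \<bullet> (B *v x) = (y v* B) \<bullet> x" by (rule dot_lmul_matrix[symmetric])
  also have "y v* B = B *v y" using assms transpose_matrix_vector[of B y] by simp
  finally show ?thesis .
qed

lemma Q_scale: fixes B :: "real^'n^'n" shows "(c *\<^sub>R x) \<bullet> (B *v (c *\<^sub>R x)) = c^2 * (x \<bullet> (B *v x))"
proof -
  have "B *v (c *\<^sub>R x) = c *\<^sub>R (B *v x)" by (rule matrix_vector_mult_scaleR)
  thus ?thesis by (simp add: power2_eq_square)
qed

lemma lagrange_aux:
  fixes g h :: real
  assumes "\<forall>s. 2 * s * g + s^2 * h \<le> 0"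
  shows "g = 0"
proof -
  define e where "e = 1 / (1 + \<bar>h\<bar>)"
  have e: "e > 0" "e * \<bar>h\<bar> < 1" unfolding e_def by (auto simp: field_simps)
  have "2*(e*g)*g + (e*g)^2*h \<le> 0" using assms by blast
  hence "g^2 * (e * (2 + e*h)) \<le> 0" by (simp add: algebra_simps power2_eq_square)
  moreover have "e*h > -1" using e by (smt (verit) mult_minus_right abs_ge_minus_self mult_left_mono)
  hence "e * (2 + e*h) > 0" using e by (smt (verit) mult_pos_pos)
  ultimately have "g^2 \<le> 0" by (smt (verit) mult_pos_pos zero_less_power2 mult_le_0_iff)
  thus ?thesis by simp
qed

lemma neg_on_perp:
  fixes B :: "real^'q^'q"
  assumes sym: "transpose B = B" and v: "v \<noteq> 0" "B *v v = r *\<^sub>R v"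
    and dim1: "dim (eigsp B r) = 1"
    and neg: "\<forall>\<mu>. is_eigenvalue B \<mu> \<and> \<mu> \<noteq> r \<longrightarrow> \<mu> < 0"
    and x: "x \<bullet> v = 0" "x \<noteq> 0"
  shows "x \<bullet> (B *v x) < 0"
proof -
  define Q where "Q = (\<lambda>y. y \<bullet> (B *v y))"
  define S where "S = sphere (0::real^'q) 1 \<inter> {y. v \<bullet> y = 0}"
  have cS: "compact S" unfolding S_def
    by (intro compact_Int_closed compact_sphere closed_hyperplane)
  have xS: "(1 / norm x) *\<^sub>R x \<in> S" using x by (simp add: S_def inner_commute)
  hence neS: "S \<noteq> {}" by auto
  have cQ: "continuous_on S Q" unfolding Q_def
    by (intro continuous_on_inner continuous_on_id matrix_vector_mult_linear_continuous_on)
  obtain x0 where x0: "x0 \<in> S" and mx: "\<forall>y\<in>S. Q y \<le> Q x0"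
    using continuous_attains_sup[OF cS neS cQ] by blast
  define m where "m = Q x0"
  have x0v: "x0 \<bullet> v = 0" and nx0: "norm x0 = 1" using x0 by (auto simp: S_def inner_commute)
  have bound: "Q z \<le> m * (z \<bullet> z)" if "z \<bullet> v = 0" for z
  proof (cases "z = 0")
    case True thus ?thesis by (simp add: Q_def)
  next
    case False
    have "(1 / norm z) *\<^sub>R z \<in> S" using that False by (simp add: S_def inner_commute)
    hence "Q ((1 / norm z) *\<^sub>R z) \<le> m" using mx m_def by blast
    hence "(1/norm z)^2 * Q z \<le> m" unfolding Q_def Q_scale .
    moreover have "z \<bullet> z = (norm z)^2" by (simp add: power2_norm_eq_inner)
    moreover have "norm z > 0" using False by simp
    ultimately show ?thesis by (simp add: field_simps power2_eq_square)
  qed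
  define w where "w = B *v x0 - m *\<^sub>R x0"
  have wv: "w \<bullet> v = 0"
  proof -
    have "(B *v x0) \<bullet> v = x0 \<bullet> (B *v v)" using symB[OF sym, of x0 v] by simp
    also have "\<dots> = 0" using v x0v by simp
    finally show ?thesis using x0v by (simp add: w_def inner_diff_left)
  qed
  have "\<forall>s. 2 * s * (w \<bullet> w) + s^2*(Q w - m * (w \<bullet> w)) \<le> 0"
  proof
    fix s :: real
    have "(x0 + s *\<^sub>R w) \<bullet> v = 0" using x0v wv by (simp add: inner_add_left)
    hence b: "Q (x0 + s *\<^sub>R w) \<le> m * ((x0 + s *\<^sub>R w) \<bullet> (x0 + s *\<^sub>R w))" by (rule bound)
    have x0x0: "x0 \<bullet> x0 = 1" using nx0 by (simp add: power2_norm_eq_inner[symmetric])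
    have sw: "x0 \<bullet> (B *v w) = (B *v x0) \<bullet> w" using symB[OF sym] by simp
    have "Q (x0 + s *\<^sub>R w) = m + 2 * s * ((B *v x0) \<bullet> w) + s^2 * Q w"
      unfolding Q_def m_def using sw
      by (simp add: matrix_vector_right_distrib matrix_vector_mult_scaleR inner_add_left inner_add_right
          power2_eq_square algebra_simps inner_commute)
    moreover have "(x0 + s *\<^sub>R w) \<bullet> (x0 + s *\<^sub>R w) = 1 + 2 * s * (x0 \<bullet> w) + s^2 * (w \<bullet> w)"
      using x0x0 by (simp add: inner_add_left inner_add_right power2_eq_square algebra_simps inner_commute)
    moreover have "(B *v x0) \<bullet> w - m * (x0 \<bullet> w) = w \<bullet> w"
      by (simp add: w_def inner_diff_left)
    ultimately show "2 * s * (w \<bullet> w) + s^2*(Q w - m * (w \<bullet> w)) \<le> 0" using b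
      by (simp add: algebra_simps)
  qed
  hence "w \<bullet> w = 0" by (rule lagrange_aux)
  hence "w = 0" by simp
  hence eig: "B *v x0 = m *\<^sub>R x0" by (simp add: w_def)
  have x0nz: "x0 \<noteq> 0" using nx0 by auto
  have "m \<noteq> r"
  proof
    assume mr: "m = r"
    have sub: "subspace (eigsp B r)" unfolding subspace_def eigsp_def
      by (auto simp: matrix_vector_right_distrib matrix_vector_mult_scaleR algebra_simps)
    have "{v} \<subseteq> eigsp B r" using v by (simp add: eigsp_def)
    moreover have "dim (eigsp B r) \<le> dim {v}" using dim1 v by (simp add: dim_singleton)
    ultimately have "span {v} = span (eigsp B r)" by (rule dim_eq_span)
    also have "\<dots> = eigsp B r" using sub by (simp add: span_eq_iff)
    finally have "x0 \<in> span {v}" using eig mr by (simp add: eigsp_def)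
    then obtain k where "x0 = k *\<^sub>R v" by (auto simp: span_singleton)
    hence "k * (v \<bullet> v) = 0" using x0v by simp
    hence "k = 0" using v by simp
    thus False using x0nz \<open>x0 = k *\<^sub>R v\<close> by simp
  qed
  moreover have "is_eigenvalue B m" unfolding is_eigenvalue_def using eig x0nz by blast
  ultimately have "m < 0" using neg by blast
  moreover have "Q x \<le> m * (x \<bullet> x)" using bound x by blast
  moreover have "x \<bullet> x > 0" using x by simp
  ultimately show ?thesis unfolding Q_def by (smt (verit) mult_neg_pos)
qed


lemma Q_nonneg:
  fixes B :: "real^'n^'n"
  assumes "nonneg_matrix B" "\<forall>i. z$i \<ge> 0"
  shows "z \<bullet> (B *v z) \<ge> 0"
  using assms unfolding nonneg_matrix_def inner_vec_def matrix_vector_mult_def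
  by (auto intro!: sum_nonneg mult_nonneg_nonneg)

lemma sum_comp_scale: "(\<Sum>i\<in>UNIV. (c *\<^sub>R (z::real^'n))$i) = c * (\<Sum>i\<in>UNIV. z$i)"
  by (simp add: sum_distrib_left)

lemma two_by_two:
  fixes a b c s t :: real
  assumes "a \<ge> 0" "b \<ge> 0" "a* s^2 - 2*c* s*t + b*t^2 < 0"
  shows "a * b < c^2"
proof (rule ccontr)
  assume "\<not> a * b < c^2"
  hence h: "a*b \<ge> c^2" by simp
  show False
  proof (cases "a = 0")
    case True
    hence "c * c \<le> 0" using h by (simp add: power2_eq_square)
    hence "c = 0" by (auto simp: mult_le_0_iff)
    moreover have "b*t^2 \<ge> 0" using assms(2) by simp
    ultimately show False using assms(3) True by simp
  next
    case False
    hence ap: "a > 0" using assms by simp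
    have "a * (a* s^2 - 2*c* s*t + b*t^2) = (a* s - c*t)^2 + (a*b - c^2)*t^2"
      by (simp add: power2_eq_square algebra_simps)
    also have "\<dots> \<ge> 0" using h by simp
    finally show False using ap assms(3) by (smt (verit) mult_pos_neg)
  qed
qed

theorem lemma17:
  fixes B :: "real^'q^'q" and z1 z2 :: "real^'q"
  assumes "antiferromagnetic B"
    and "\<forall>i. z1$i \<ge> 0" and "\<forall>i. z2$i \<ge> 0"
    and "(\<Sum>i\<in>UNIV. \<bar>z1$i\<bar>) = 1" and "(\<Sum>i\<in>UNIV. \<bar>z2$i\<bar>) = 1"
  shows "(z1 \<bullet> (B *v z1)) * (z2 \<bullet> (B *v z2)) \<le> (z1 \<bullet> (B *v z2))^2
         \<and> ((z1 \<bullet> (B *v z1)) * (z2 \<bullet> (B *v z2)) = (z1 \<bullet> (B *v z2))^2 \<longleftrightarrow> z1 = z2)"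
proof (cases "z1 = z2")
  case True thus ?thesis by (simp add: power2_eq_square)
next
  case False
  from assms(1) obtain r where sym: "transpose B = B" and nn: "nonneg_matrix B"
    and r: "r > 0" "is_eigenvalue B r" "dim (eigsp B r) = 1"
    and neg: "\<forall>\<mu>. is_eigenvalue B \<mu> \<and> \<mu> \<noteq> r \<longrightarrow> \<mu> < 0"
    unfolding antiferromagnetic_def sym_matrix_def by blast
  from r(2) obtain v where v: "v \<noteq> 0" "B *v v = r *\<^sub>R v" unfolding is_eigenvalue_def by blast
  note NP = neg_on_perp[OF sym v r(3) neg]
  define a where "a = z1 \<bullet> (B *v z1)"
  define b where "b = z2 \<bullet> (B *v z2)"
  define c where "c = z1 \<bullet> (B *v z2)"
  have a0: "a \<ge> 0" unfolding a_def by (rule Q_nonneg[OF nn assms(2)])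
  have b0: "b \<ge> 0" unfolding b_def by (rule Q_nonneg[OF nn assms(3)])
  have s1: "(\<Sum>i\<in>UNIV. z1$i) = 1" using assms(2,4) by simp
  have s2: "(\<Sum>i\<in>UNIV. z2$i) = 1" using assms(3,5) by simp
  have z1nz: "z1 \<noteq> 0" using s1 by auto
  have z2nz: "z2 \<noteq> 0" using s2 by auto
  define \<alpha> where "\<alpha> = z1 \<bullet> v"
  define \<beta> where "\<beta> = z2 \<bullet> v"
  define w where "w = \<beta> *\<^sub>R z1 - \<alpha> *\<^sub>R z2"
  have wv: "w \<bullet> v = 0" unfolding w_def \<alpha>_def \<beta>_def by (simp add: inner_diff_left)
  have "w \<noteq> 0"
  proof
    assume w0: "w = 0"
    hence eq: "\<beta> *\<^sub>R z1 = \<alpha> *\<^sub>R z2" by (simp add: w_def)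
    have "(\<Sum>i\<in>UNIV. (\<beta> *\<^sub>R z1)$i) = (\<Sum>i\<in>UNIV. (\<alpha> *\<^sub>R z2)$i)" by (simp only: eq)
    hence ab: "\<beta> = \<alpha>" using s1 s2 by (simp add: sum_distrib_left[symmetric])
    show False
    proof (cases "\<alpha> = 0")
      case True
      hence "a < 0" unfolding a_def using NP[of z1] z1nz \<alpha>_def by simp
      thus False using a0 by simp
    next
      case False
      thus False using eq ab \<open>z1 \<noteq> z2\<close> by simp
    qed
  qed
  hence "w \<bullet> (B *v w) < 0" using NP wv by blast
  moreover have "w \<bullet> (B *v w) = a*\<beta>^2 - 2*c*\<beta>*\<alpha> + b*\<alpha>^2"
  proof -
    have sc: "z2 \<bullet> (B *v z1) = c" unfolding c_def using symB[OF sym, of z2 z1] by (simp add: inner_commute)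
    show ?thesis unfolding w_def a_def b_def using sc c_def
      by (simp add: matrix_vector_mult_diff_distrib matrix_vector_mult_scaleR inner_diff_left inner_diff_right
          power2_eq_square algebra_simps)
  qed
  ultimately have "a*\<beta>^2 - 2*c*\<beta>*\<alpha> + b*\<alpha>^2 < 0" by simp
  hence "a * b < c^2" by (rule two_by_two[OF a0 b0])
  thus ?thesis using False unfolding a_def b_def c_def by simp
qed

end
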